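(* Let $N\ge 1$ be an integer, $\Omega>0$, $\bar\gamma>0$, $\tau\in(0,1)$, $R>0$, and put $\gamma_0=2^R-1$. Let $\mathbf{h},\mathbf{g}\in\mathbb{C}^N$ be independent random vectors whose $2N$ entries are i.i.d. circularly symmetric complex Gaussian with mean $0$ and variance $\Omega$, and define $$\gamma_A=\frac{\tau}{1-\tau}\,\bar\gamma\,\|\mathbf{h}\|^2\|\mathbf{g}\|^2 .$$ Writing $x=\sqrt{\frac{(1-\tau)\gamma_0}{\tau\bar\gamma\Omega^2}}$, the outage probability satisfies $$P_{out}(\tau)=\Pr\big(\log_2(1+\gamma_A)<R\big)=\Pr(\gamma_A<\gamma_0)=1-\frac{2}{(N-1)!}\sum_{p=0}^{N-1}\frac{x^{N+p}K_{N-p}(2x)}{p!},$$ and consequently the delay-limited average throughput $\rho_{lim}=(1-P_{out}(\tau))R(1-\tau)$ equals $$\rho_{lim}=\frac{2R(1-\tau)}{(N-1)!}\sum_{p=0}^{N-1}\frac{x^{N+p}K_{N-p}(2x)}{p!}.$$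
   Context: $K_n(\cdot)$ denotes the modified Bessel function of the second kind of order $n$. $\|\cdot\|$ is the Euclidean norm. In the paper's model, $\mathbf{h}$ and $\mathbf{g}$ are the downlink and uplink channel vectors between an $N$-antenna access point and a single-antenna user, $\tau$ is the fraction of the block used for energy harvesting, $\bar\gamma=\eta P/\sigma^2$ is a normalized transmit SNR, $R$ is the user's fixed transmission rate, and $\gamma_A$ is the received SNR at the access point under maximum-ratio transmission and maximum-ratio combining. *)

theory Defs
  imports "HOL-Probability.Probability"
begin

text \<open>Modified Bessel function of the second kind of (real) order nu, for real argument z > 0,
  via the standard integral representation (DLMF 10.32.9):
  K_nu(z) = integral over t from 0 to infinity of exp(-z cosh t) cosh(nu t).\<close>
definition bessel_K :: "real \<Rightarrow> real \<Rightarrow> real" where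
  "bessel_K \<nu> z = integral {0..} (\<lambda>t. exp (- z * cosh t) * cosh (\<nu> * t))"

definition cscg_density :: "real \<Rightarrow> complex \<Rightarrow> ennreal" where
  "cscg_density \<Omega> z = ennreal (exp (- (cmod z)\<^sup>2 / \<Omega>) / (pi * \<Omega>))"

end

theory Submission
  imports Defs "HOL-Real_Asymp.Real_Asymp"
begin

lemma bessel_has_integral:
  fixes m :: nat and c z :: real
  assumes m: "m \<ge> 1" and c: "c > 0" and z: "z > 0"
  shows "((\<lambda>w. w^(m-1) * exp(-(z/c)*w - z*c/w)) has_integral 2 * c^m * bessel_K (real m) (2*z)) {0<..}"
proof -
  define f where "f = (\<lambda>w::real. w^(m-1) * exp(-(z/c)*w - z*c/w))"
  define a where "a = z / c"
  have a: "a > 0" using c z by (simp add: a_def)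
  define e where "e = (\<lambda>w. fact (m-1) / a^m * erlang_density (m-1) a w)"
  have e_int: "(e has_integral (fact (m-1) / a^m)) UNIV"
  proof -
    have "(\<integral>\<^sup>+ x. ennreal (erlang_density (m-1) a x * x ^ 0) \<partial>lborel) = fact (m-1+0) / (fact (m-1) * a ^ 0)"
      by (rule nn_integral_erlang_ith_moment[OF a])
    then have "(\<integral>\<^sup>+ x. ennreal (erlang_density (m-1) a x) \<partial>lborel) = ennreal 1" by simp
    then have "(erlang_density (m-1) a has_integral 1) UNIV"
      by (intro nn_integral_has_integral) (auto simp: a less_imp_le)
    from has_integral_mult_right[OF this, of "fact (m-1) / a^m"] show ?thesis
      by (simp add: e_def)
  qed
  have f_abs: "f absolutely_integrable_on {0<..}"
  proof (rule measurable_bounded_by_integrable_imp_absolutely_integrable[where g=e])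
    show "f \<in> borel_measurable (lebesgue_on {0<..})"
      unfolding f_def by (intro continuous_imp_measurable_on_sets_lebesgue continuous_intros) auto
    show "{0::real<..} \<in> sets lebesgue" by simp
    show "e integrable_on {0<..}"
    proof -
      have "e absolutely_integrable_on UNIV"
        using e_int a by (intro nonnegative_absolutely_integrable_1) (auto simp: e_def)
      then have "e absolutely_integrable_on {0<..}"
        by (rule set_integrable_subset) (auto intro!: sets_completionI_sets borel_open)
      then show ?thesis by (simp add: absolutely_integrable_on_def has_integral_integral)
    qed
    fix w :: real assume w: "w \<in> {0<..}"
    have m1: "a ^ m = a * a^(m-1)" using m by (metis Suc_diff_le diff_Suc_1 power_Suc)
    have "norm (f w) = w^(m-1) * exp(-(z/c)*w - z*c/w)" using w by (simp add: f_def)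
    also have "\<dots> \<le> w^(m-1) * exp(-a*w)"
      using w c z by (auto simp: a_def intro!: mult_left_mono)
    also have "\<dots> = e w" using w a m1 by (simp add: e_def erlang_density_def)
    finally show "norm (f w) \<le> e w" .
  qed
  define b where "b = integral {0<..} f"
  define G where "G = (\<lambda>s::real. c^m * exp (real m * s) * exp (-(2*z) * cosh s))"
  have Gf: "\<bar>c * exp s\<bar> * f (c * exp s) = G s" for s
  proof -
    have e1: "(c * exp s)^(m-1) * (c * exp s) = c^m * exp (real m * s)"
    proof -
      have "(c * exp s)^(m-1) * (c * exp s) = (c * exp s)^m" using m by (metis One_nat_def Suc_le_eq power_minus_mult)
      also have "\<dots> = c^m * exp (real m * s)" by (simp add: power_mult_distrib exp_of_nat_mult)
      finally show ?thesis .
    qed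
    have e2: "-(z/c)*(c * exp s) - z*c/(c * exp s) = -(2*z) * cosh s"
      using c by (simp add: cosh_def exp_minus field_simps)
    show ?thesis using c unfolding f_def G_def
      by (simp only: abs_of_pos[of "c * exp s"] mult_pos_pos exp_gt_zero) (metis (no_types, lifting) e1 e2 mult.commute mult.left_commute)
  qed
  have img: "(\<lambda>s. c * exp s) ` UNIV = {0<..}"
  proof (intro equalityI subsetI)
    show "w \<in> {0<..}" if "w \<in> range (\<lambda>s. c * exp s)" for w using that c by auto
    fix w :: real assume "w \<in> {0<..}"
    then have "w = c * exp (ln (w / c))" using c by simp
    then show "w \<in> range (\<lambda>s. c * exp s)" by blast
  qed
  have "(\<lambda>s. \<bar>c * exp s\<bar> * f (c * exp s)) absolutely_integrable_on UNIV \<and>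
           integral UNIV (\<lambda>s. \<bar>c * exp s\<bar> * f (c * exp s)) = b"
    using f_abs c unfolding b_def
    by (subst has_absolute_integral_change_of_variables_1'[where g="\<lambda>s. c * exp s"])
       (auto intro!: derivative_eq_intros simp: img inj_on_def)
  then have G_abs: "G absolutely_integrable_on UNIV" and G_int: "integral UNIV G = b"
    by (simp_all add: Gf)
  have G0: "G absolutely_integrable_on {0..}"
    using G_abs by (rule set_integrable_subset) auto
  have Gn: "G absolutely_integrable_on {..0}"
    using G_abs by (rule set_integrable_subset) auto
  define i where "i = integral {0..} G"
  define j where "j = integral {..0} G"
  have Gi: "(G has_integral i) {0..}" unfolding i_def
    using G0 by (simp add: absolutely_integrable_on_def has_integral_integral)
  have Gj: "(G has_integral j) {..0}" unfolding j_def
    using Gn by (simp add: absolutely_integrable_on_def has_integral_integral)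
  have "(G has_integral (i + j)) ({0..} \<union> {..0})"
    by (rule has_integral_Un[OF Gi Gj]) (subgoal_tac "{0..} \<inter> {..0} = {0::real}", auto)
  moreover have "({0..} \<union> {..0}) = (UNIV::real set)" by auto
  ultimately have "(G has_integral (i + j)) UNIV" by simp
  then have bij: "b = i + j" using G_int by (simp add: integral_unique)
  have refl: "(\<lambda>x. \<bar>-1\<bar> * G (- x)) absolutely_integrable_on {0..} \<and> integral {0..} (\<lambda>x. \<bar>-1\<bar> * G (- x)) = j
     \<longleftrightarrow> G absolutely_integrable_on (uminus ` {0..}) \<and> integral (uminus ` {0..}) G = j"
    by (rule has_absolute_integral_change_of_variables_1'[where g=uminus and g'="\<lambda>_. -1"])
       (auto intro!: derivative_eq_intros)
  have "uminus ` {0..} = {..(0::real)}" by simp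
  then have "(\<lambda>x. G (- x)) absolutely_integrable_on {0..} \<and> integral {0..} (\<lambda>x. G (- x)) = j"
    using refl Gn by (simp add: j_def)
  then have Gj': "((\<lambda>x. G (- x)) has_integral j) {0..}"
    by (metis absolutely_integrable_on_def has_integral_integral)
  have "((\<lambda>s. G s + G (-s)) has_integral (i + j)) {0..}"
    by (rule has_integral_add[OF Gi Gj'])
  moreover have "G s + G (-s) = (2 * c^m) * (exp (- (2*z) * cosh t) * cosh (real m * t))" if "t = s" for s t
    unfolding G_def that by (simp add: cosh_def exp_minus field_simps)
  ultimately have "((\<lambda>s. (2 * c^m) * (exp (- (2*z) * cosh s) * cosh (real m * s))) has_integral b) {0..}"
    using bij by simp
  then have "((\<lambda>s. exp (- (2*z) * cosh s) * cosh (real m * s)) has_integral b / (2 * c^m)) {0..}"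
  proof -
    have "((\<lambda>s. (1/(2*c^m)) * ((2 * c^m) * (exp (- (2*z) * cosh s) * cosh (real m * s)))) has_integral (1/(2*c^m)) * b) {0..}"
      by (rule has_integral_mult_right) fact
    then show ?thesis using c by simp
  qed
  then have K: "bessel_K (real m) (2*z) = b / (2 * c^m)"
    unfolding bessel_K_def by (rule integral_unique)
  have "(f has_integral b) {0<..}" unfolding b_def
    using f_abs by (simp add: absolutely_integrable_on_def has_integral_integral)
  then show ?thesis using K c unfolding f_def by simp
qed

lemma emeasure_annulus:
  assumes a: "a \<ge> 0"
  shows "emeasure lborel {z::complex. a < (cmod z)^2 \<and> (cmod z)^2 \<le> s} = (if a \<le> s then ennreal (pi*(s-a)) else 0)"
proof (cases "a \<le> s")
  case False
  have E: "{z::complex. a < (cmod z)^2 \<and> (cmod z)^2 \<le> s} = {}" using False by auto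
  show ?thesis using False unfolding E by simp
next
  case True
  have cb: "cball 0 (sqrt r) = {z::complex. (cmod z)^2 \<le> r}" if "r \<ge> 0" for r
  proof -
    have "cmod z \<le> sqrt r \<longleftrightarrow> (cmod z)^2 \<le> r" for z :: complex
    proof -
      have "(cmod z \<le> sqrt r) = (sqrt ((cmod z)^2) \<le> sqrt r)" by simp
      also have "\<dots> = ((cmod z)^2 \<le> r)" by (rule real_sqrt_le_iff)
      finally show ?thesis .
    qed
    then show ?thesis by (simp add: set_eq_iff dist_norm)
  qed
  have vol: "emeasure lborel (cball (0::complex) (sqrt r)) = ennreal (pi * r)" if "r \<ge> 0" for r
    using that by (simp add: emeasure_cball unit_ball_vol_2)
  have E: "{z::complex. a < (cmod z)^2 \<and> (cmod z)^2 \<le> s} = cball 0 (sqrt s) - cball 0 (sqrt a)"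
    using a True by (auto simp: cb)
  have "emeasure lborel (cball (0::complex) (sqrt s) - cball 0 (sqrt a)) = emeasure lborel (cball (0::complex) (sqrt s)) - emeasure lborel (cball (0::complex) (sqrt a))"
    using a True by (intro emeasure_Diff) (simp_all add: vol subset_cball)
  also have "\<dots> = ennreal (pi*(s-a))"
    using a True by (simp add: vol ennreal_minus right_diff_distrib)
  finally show ?thesis using True unfolding E by simp
qed

lemma layer_exp:
  assumes l: "l > 0"
  shows "(\<integral>\<^sup>+t. ennreal (l^2/pi * exp(-l*t)) * indicator {b ..} t \<partial>lborel) = ennreal (l/pi * exp(-l*b))"
proof -
  have "(\<integral>\<^sup>+t. ennreal (l^2/pi * exp(-l*t)) * indicator {b ..} t \<partial>lborel) = 0 - (-(l/pi)*exp(-l*b))"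
  proof (rule nn_integral_FTC_atLeast)
    show "(\<lambda>t. l^2/pi * exp(-l*t)) \<in> borel_measurable borel" by measurable
    show "((\<lambda>t. -(l/pi)*exp(-l*(t::real))) \<longlongrightarrow> 0) at_top" using l by real_asymp
    fix t :: real
    show "0 \<le> l^2/pi * exp(-l*t)" by simp
    show "((\<lambda>t. -(l/pi)*exp(-l*(t::real))) has_real_derivative l^2/pi * exp(-l*t)) (at t)"
      by (auto intro!: derivative_eq_intros simp: power2_eq_square)
  qed
  then show ?thesis by simp
qed

lemma annulus_int:
  assumes l: "l > 0" and a: "a \<ge> 0"
  shows "(\<integral>\<^sup>+t. ennreal (l^2 * (t-a) * exp(-l*t)) * indicator {a ..} t \<partial>lborel) = ennreal (exp(-a*l))"
proof -
  have "(\<integral>\<^sup>+t. ennreal (l^2 * (t-a) * exp(-l*t)) * indicator {a ..} t \<partial>lborel) = 0 - (-(l*(a-a)+1)*exp(-l*a))"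
  proof (rule nn_integral_FTC_atLeast[where F="\<lambda>t. -(l*(t-a)+1)*exp(-l*t)"])
    show "(\<lambda>t. l^2 * (t-a) * exp(-l*t)) \<in> borel_measurable borel" by measurable
    show "((\<lambda>t. -(l*(t-a)+1)*exp(-l*(t::real))) \<longlongrightarrow> 0) at_top" using l by real_asymp
    fix t :: real
    assume "a \<le> t"
    then show "0 \<le> l^2 * (t-a) * exp(-l*t)" using l by simp
    show "((\<lambda>t. -(l*(t-a)+1)*exp(-l*(t::real))) has_real_derivative l^2 * (t-a) * exp(-l*t)) (at t)"
      by (auto intro!: derivative_eq_intros simp: power2_eq_square algebra_simps)
  qed
  then show ?thesis by (simp add: mult.commute)
qed

lemma cscg_sq_exponential:
  fixes Z :: "'a \<Rightarrow> complex"
  assumes P: "prob_space M" and Om: "\<Omega> > 0" and D: "distributed M lborel Z (cscg_density \<Omega>)"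
  shows "distributed M lborel (\<lambda>\<omega>. (cmod (Z \<omega>))^2) (exponential_density (1/\<Omega>))"
proof -
  interpret prob_space M by fact
  define l where "l = 1/\<Omega>"
  have l: "l > 0" using Om by (simp add: l_def)
  have Zm[measurable]: "Z \<in> borel_measurable M"
    using distributed_measurable[OF D] by simp
  have tail: "emeasure M {\<omega>\<in>space M. a < (cmod (Z \<omega>))^2} = ennreal (exp (-a*l))" if a: "a \<ge> 0" for a
  proof -
    define H where "H = (\<lambda>(z::complex, t::real). ennreal (l^2/pi * exp(-l*t)) * indicator {(cmod z)^2 ..} t * indicator {z. a < (cmod z)^2} z)"
    have "emeasure M {\<omega>\<in>space M. a < (cmod (Z \<omega>))^2} = emeasure M (Z -` {z. a < (cmod z)^2} \<inter> space M)"
      by (intro arg_cong[where f="emeasure M"]) auto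
    also have "\<dots> = (\<integral>\<^sup>+z. cscg_density \<Omega> z * indicator {z. a < (cmod z)^2} z \<partial>lborel)"
      by (rule distributed_emeasure[OF D]) measurable
    also have "\<dots> = (\<integral>\<^sup>+z. \<integral>\<^sup>+t. H (z, t) \<partial>lborel \<partial>lborel)"
    proof (intro nn_integral_cong)
      fix z :: complex
      have "cscg_density \<Omega> z = ennreal (l/pi * exp(-l*(cmod z)^2))"
        using Om by (simp add: cscg_density_def l_def field_simps)
      also have "\<dots> = (\<integral>\<^sup>+t. ennreal (l^2/pi * exp(-l*t)) * indicator {(cmod z)^2 ..} t \<partial>lborel)"
        by (rule layer_exp[OF l, symmetric])
      finally show "cscg_density \<Omega> z * indicator {z. a < (cmod z)^2} z = (\<integral>\<^sup>+t. H (z, t) \<partial>lborel)"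
        by (simp add: H_def nn_integral_multc)
    qed
    also have "\<dots> = (\<integral>\<^sup>+t. \<integral>\<^sup>+z. H (z, t) \<partial>lborel \<partial>lborel)"
    proof -
      have "H = (\<lambda>p. ennreal (l^2/pi * exp(-l * snd p)) * indicator {p. (cmod (fst p))^2 \<le> snd p \<and> a < (cmod (fst p))^2} p)"
        by (auto simp: H_def fun_eq_iff split: split_indicator)
      also have "\<dots> \<in> borel_measurable (lborel \<Otimes>\<^sub>M lborel)" by measurable
      finally have Hm: "H \<in> borel_measurable (lborel \<Otimes>\<^sub>M (lborel::real measure))" .
      have Hm': "(\<lambda>(z,t). H (z, t)) \<in> borel_measurable (lborel \<Otimes>\<^sub>M (lborel::real measure))"
        using Hm by simp
      show ?thesis using lborel_pair.Fubini'[OF Hm'] by simp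
    qed
    also have "\<dots> = (\<integral>\<^sup>+t. ennreal (l^2/pi * exp(-l*t)) * emeasure lborel {z::complex. a < (cmod z)^2 \<and> (cmod z)^2 \<le> t} \<partial>lborel)"
    proof (intro nn_integral_cong)
      fix t :: real
      have "(\<lambda>z. H (z, t)) = (\<lambda>z. ennreal (l^2/pi * exp(-l*t)) * indicator {z::complex. a < (cmod z)^2 \<and> (cmod z)^2 \<le> t} z)"
        by (auto simp: H_def split: split_indicator)
      then show "(\<integral>\<^sup>+z. H (z, t) \<partial>lborel) = ennreal (l^2/pi * exp(-l*t)) * emeasure lborel {z::complex. a < (cmod z)^2 \<and> (cmod z)^2 \<le> t}"
        by (simp add: nn_integral_cmult_indicator)
    qed
    also have "\<dots> = (\<integral>\<^sup>+t. ennreal (l^2 * (t-a) * exp(-l*t)) * indicator {a ..} t \<partial>lborel)"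
    proof (intro nn_integral_cong)
      fix t :: real
      show "ennreal (l^2/pi * exp(-l*t)) * emeasure lborel {z::complex. a < (cmod z)^2 \<and> (cmod z)^2 \<le> t} = ennreal (l^2 * (t-a) * exp(-l*t)) * indicator {a ..} t"
        using a l by (simp add: emeasure_annulus ennreal_mult'[symmetric] split: split_indicator)
    qed
    also have "\<dots> = ennreal (exp(-a*l))" by (rule annulus_int[OF l a])
    finally show ?thesis .
  qed
  have "\<forall>a\<ge>0. prob {\<omega>\<in>space M. (cmod (Z \<omega>))^2 \<le> a} = 1 - exp (- a * l)"
  proof (intro allI impI)
    fix a :: real assume a: "0 \<le> a"
    have "{\<omega>\<in>space M. (cmod (Z \<omega>))^2 \<le> a} = space M - {\<omega>\<in>space M. a < (cmod (Z \<omega>))^2}" by auto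
    then have "prob {\<omega>\<in>space M. (cmod (Z \<omega>))^2 \<le> a} = 1 - prob {\<omega>\<in>space M. a < (cmod (Z \<omega>))^2}"
      by (simp add: prob_compl)
    moreover have "prob {\<omega>\<in>space M. a < (cmod (Z \<omega>))^2} = exp (-a*l)"
      using tail[OF a] by (simp add: emeasure_eq_measure)
    ultimately show "prob {\<omega>\<in>space M. (cmod (Z \<omega>))^2 \<le> a} = 1 - exp (- a * l)" by simp
  qed
  then show ?thesis unfolding l_def[symmetric]
    by (subst exponential_distributed_iff[OF l]) simp
qed

lemma erlang_upper_tail:
  assumes l: "l > 0" and b: "b \<ge> 0"
  shows "(\<integral>\<^sup>+v. ennreal (erlang_density K l v) * indicator {b ..} v \<partial>lborel)
     = ennreal (\<Sum>n\<le>K. (l*b)^n * exp (-l*b) / fact n)"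
proof -
  define S where "S = (\<Sum>n\<le>K. (l*b)^n * exp (-l*b) / fact n)"
  define I where "I = (\<integral>\<^sup>+v. ennreal (erlang_density K l v) * indicator {b<..} v \<partial>lborel)"
  have S0: "S \<ge> 0" unfolding S_def by (intro sum_nonneg) (use l b in auto)
  have CDF: "erlang_CDF K l b = 1 - S" using b by (simp add: erlang_CDF_def S_def mult_ac)
  have S1: "S \<le> 1" using erlang_CDF_nonneg[OF l, of K b] CDF by simp
  have "(\<integral>\<^sup>+v. ennreal (erlang_density K l v) * indicator {b ..} v \<partial>lborel) = I"
    unfolding I_def
    by (intro nn_integral_cong_AE) (use AE_lborel_singleton[of b] in \<open>auto split: split_indicator\<close>)
  moreover have "ennreal (1 - S) + I = 1"
  proof -
    have "ennreal (1 - S) + I = (\<integral>\<^sup>+v. ennreal (erlang_density K l v) * indicator {.. b} v \<partial>lborel) + I"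
      using nn_integral_erlang_density[OF l, of K b] CDF by simp
    also have "\<dots> = (\<integral>\<^sup>+v. ennreal (erlang_density K l v) * indicator {.. b} v + ennreal (erlang_density K l v) * indicator {b<..} v \<partial>lborel)"
      unfolding I_def by (intro nn_integral_add[symmetric]) auto
    also have "\<dots> = (\<integral>\<^sup>+v. ennreal (erlang_density K l v * v ^ 0) \<partial>lborel)"
      by (intro nn_integral_cong) (auto split: split_indicator)
    also have "\<dots> = 1"
      using nn_integral_erlang_ith_moment[OF l, of K 0] by simp
    finally show ?thesis .
  qed
  then have "I = ennreal S"
  proof -
    assume e: "ennreal (1 - S) + I = 1"
    have "I = 1 - ennreal (1 - S)" using e by (metis add_diff_cancel_left' ennreal_add_diff_cancel_left ennreal_neq_top)
    also have "\<dots> = ennreal S" using S0 S1 by (subst ennreal_1[symmetric], subst ennreal_minus) auto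
    finally show ?thesis .
  qed
  ultimately show ?thesis by (simp add: S_def)
qed

lemma bessel_nn:
  fixes m :: nat and c z :: real
  assumes m: "m \<ge> 1" and c: "c > 0" and z: "z > 0"
  shows "(\<integral>\<^sup>+w. ennreal (w^(m-1) * exp(-(z/c)*w - z*c/w)) * indicator {0<..} w \<partial>lborel) = ennreal (2 * c^m * bessel_K (real m) (2*z))"
  by (rule nn_integral_has_integral_lebesgue'[OF _ bessel_has_integral[OF m c z]]) auto

lemma bessel_K_nonneg: "bessel_K \<nu> z \<ge> 0"
proof (cases "(\<lambda>t. exp (- z * cosh t) * cosh (\<nu> * t)) integrable_on {0..}")
  case True
  then show ?thesis unfolding bessel_K_def
    by (rule integral_nonneg) (auto intro!: mult_nonneg_nonneg simp: cosh_def)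
next
  case False
  then show ?thesis unfolding bessel_K_def by (simp add: not_integrable_integral)
qed

lemma pow_alg:
  fixes l t :: real and K n :: nat
  assumes "t \<ge> 0" "n \<le> K"
  shows "l^(K+1)*(l*t)^n * sqrt t^(K+1-n) = (l * sqrt t)^(K+1+n)"
proof -
  have "(l*t)^n = l^n * sqrt t^(2*n)" using assms
    by (simp add: power_mult_distrib power_mult)
  then have "l^(K+1)*(l*t)^n * sqrt t^(K+1-n) = (l^(K+1) * l^n) * (sqrt t^(2*n) * sqrt t^(K+1-n))"
    by (simp add: mult_ac)
  also have "\<dots> = l^(K+1+n) * sqrt t^(K+1+n)"
  proof -
    have a1: "l^(K+1) * l^n = l^(K+1+n)" by (simp add: power_add)
    have "2*n + (K+1-n) = K+1+n" using assms by simp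
    then have a2: "sqrt t^(2*n) * sqrt t^(K+1-n) = sqrt t^(K+1+n)" by (metis power_add)
    show ?thesis by (simp only: a1 a2)
  qed
  finally show ?thesis by (simp only: power_mult_distrib)
qed

lemma key_alg:
  fixes u l t :: real and K :: nat
  assumes u: "u > 0"
  shows "erlang_density K l u * (\<Sum>n\<le>K. (l*(t/u))^n * exp (-l*(t/u)) / fact n)
    = (\<Sum>n\<le>K. l^(K+1)*(l*t)^n/(fact K * fact n) * (u^(K-n) * exp(-l*u - l*t/u)))"
  unfolding sum_distrib_left
proof (intro sum.cong refl)
  fix n assume n: "n \<in> {..K}"
  have uK: "u^K = u^(K-n) * u^n" using n by (simp add: power_add[symmetric])
  have e: "exp (-l*u) * exp (-l*(t/u)) = exp(-l*u - l*t/u)" by (simp add: exp_add[symmetric])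
  show "erlang_density K l u * ((l*(t/u))^n * exp (-l*(t/u)) / fact n) = l^(K+1)*(l*t)^n/(fact K * fact n) * (u^(K-n) * exp(-l*u - l*t/u))"
    using u unfolding erlang_density_def e[symmetric]
    by (simp add: uK power_divide field_simps)
qed

lemma (in prob_space) erlang_product_tail:
  assumes l: "l > 0" and t: "t > 0"
    and X: "distributed M lborel X (erlang_density K l)" and Y: "distributed M lborel Y (erlang_density K l)"
    and ind: "indep_var borel X borel Y"
  shows "emeasure M {\<omega>\<in>space M. t \<le> X \<omega> * Y \<omega>} =
    ennreal (\<Sum>n\<le>K. 2 * (l * sqrt t)^(K+1+n) * bessel_K (real (K+1-n)) (2*(l * sqrt t)) / (fact K * fact n))"
proof -
  define D where "D = erlang_density K l"
  define Q where "Q = (\<lambda>b. \<Sum>n\<le>K. (l*b)^n * exp (-l*b) / fact n)"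
  define c where "c = (\<lambda>n. l^(K+1)*(l*t)^n/(fact K * fact n))"
  define A where "A = {p::real\<times>real. t \<le> fst p * snd p}"
  have ind': "indep_var lborel X lborel Y"
  proof -
    have cb: "\<And>a::real measure. (\<lambda>i::bool. case i of True \<Rightarrow> a | False \<Rightarrow> a) = (\<lambda>_. a)"
      by (simp add: fun_eq_iff split: bool.split)
    show ?thesis using ind unfolding indep_var_def indep_vars_def cb by simp
  qed
  have XY: "distributed M (lborel \<Otimes>\<^sub>M lborel) (\<lambda>\<omega>. (X \<omega>, Y \<omega>)) (\<lambda>(u,v). ennreal (D u) * ennreal (D v))"
    unfolding D_def
    by (rule distributed_joint_indep[OF lborel.sigma_finite_measure_axioms lborel.sigma_finite_measure_axioms X Y ind'])
  have Am: "A \<in> sets (lborel \<Otimes>\<^sub>M lborel)"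
  proof -
    have "(\<lambda>p::real\<times>real. fst p * snd p) \<in> borel_measurable (lborel \<Otimes>\<^sub>M lborel)" by measurable
    then have "(\<lambda>p::real\<times>real. fst p * snd p) -` {t ..} \<inter> space (lborel \<Otimes>\<^sub>M lborel) \<in> sets (lborel \<Otimes>\<^sub>M lborel)"
      by (rule measurable_sets) simp
    moreover have "(\<lambda>p::real\<times>real. fst p * snd p) -` {t ..} \<inter> space (lborel \<Otimes>\<^sub>M lborel) = A"
      by (auto simp: A_def space_pair_measure)
    ultimately show ?thesis by simp
  qed
  have "emeasure M {\<omega>\<in>space M. t \<le> X \<omega> * Y \<omega>} = emeasure M ((\<lambda>\<omega>. (X \<omega>, Y \<omega>)) -` A \<inter> space M)"
    by (intro arg_cong[where f="emeasure M"]) (auto simp: A_def)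
  also have "\<dots> = (\<integral>\<^sup>+p. (\<lambda>(u,v). ennreal (D u) * ennreal (D v)) p * indicator A p \<partial>(lborel \<Otimes>\<^sub>M lborel))"
    by (rule distributed_emeasure[OF XY Am])
  also have "\<dots> = (\<integral>\<^sup>+u. \<integral>\<^sup>+v. ennreal (D u) * ennreal (D v) * indicator A (u,v) \<partial>lborel \<partial>lborel)"
    by (subst lborel.nn_integral_fst[symmetric]) (auto simp: D_def A_def)
  also have "\<dots> = (\<integral>\<^sup>+u. ennreal (D u * Q (t/u)) * indicator {0<..} u \<partial>lborel)"
  proof (intro nn_integral_cong)
    fix u :: real
    show "(\<integral>\<^sup>+v. ennreal (D u) * ennreal (D v) * indicator A (u,v) \<partial>lborel) = ennreal (D u * Q (t/u)) * indicator {0<..} u"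
    proof (cases "u > 0")
      case True
      have "(\<integral>\<^sup>+v. ennreal (D u) * ennreal (D v) * indicator A (u,v) \<partial>lborel)
          = (\<integral>\<^sup>+v. ennreal (D u) * (ennreal (D v) * indicator {t/u ..} v) \<partial>lborel)"
        using True by (intro nn_integral_cong) (auto simp: A_def pos_divide_le_eq mult.commute split: split_indicator)
      also have "\<dots> = ennreal (D u) * ennreal (Q (t/u))"
        using True t l by (simp add: nn_integral_cmult D_def Q_def erlang_upper_tail)
      finally show ?thesis using True l by (simp add: ennreal_mult'[symmetric] D_def Q_def)
    next
      case False
      have "ennreal (D u) * ennreal (D v) * indicator A (u,v) = 0" for v
      proof (cases "u = 0")
        case True then show ?thesis using t by (simp add: A_def)
      next
        case False then show ?thesis using \<open>\<not> u > 0\<close> by (simp add: D_def erlang_density_def)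
      qed
      then have "(\<lambda>v. ennreal (D u) * ennreal (D v) * indicator A (u,v)) = (\<lambda>_. 0)"
        by (intro ext)
      then show ?thesis using False by simp
    qed
  qed
  also have "\<dots> = (\<integral>\<^sup>+u. (\<Sum>n\<le>K. ennreal (c n) * (ennreal (u^(K-n) * exp(-l*u - l*t/u)) * indicator {0<..} u)) \<partial>lborel)"
  proof (intro nn_integral_cong)
    fix u :: real
    show "ennreal (D u * Q (t/u)) * indicator {0<..} u = (\<Sum>n\<le>K. ennreal (c n) * (ennreal (u^(K-n) * exp(-l*u - l*t/u)) * indicator {0<..} u))"
    proof (cases "u > 0")
      case True
      have "D u * Q (t/u) = (\<Sum>n\<le>K. c n * (u^(K-n) * exp(-l*u - l*t/u)))"
        unfolding D_def Q_def c_def by (rule key_alg[OF True])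
      then show ?thesis using True l t
        by (simp add: c_def ennreal_mult[symmetric] sum_ennreal[symmetric] del: sum_ennreal)
    qed simp
  qed
  also have "\<dots> = (\<Sum>n\<le>K. ennreal (c n) * (\<integral>\<^sup>+u. ennreal (u^(K-n) * exp(-l*u - l*t/u)) * indicator {0<..} u \<partial>lborel))"
    by (subst nn_integral_sum) (auto simp: nn_integral_cmult)
  also have "\<dots> = (\<Sum>n\<le>K. ennreal (c n) * ennreal (2 * sqrt t^(K+1-n) * bessel_K (real (K+1-n)) (2*(l * sqrt t))))"
  proof (intro sum.cong refl arg_cong2[where f="(*)"])
    fix n assume n: "n \<in> {..K}"
    have st: "sqrt t > 0" "l * sqrt t / sqrt t = l" "l * sqrt t * sqrt t = l * t" using t by auto
    have "(\<integral>\<^sup>+u. ennreal (u^(K-n) * exp(-l*u - l*t/u)) * indicator {0<..} u \<partial>lborel)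
        = (\<integral>\<^sup>+u. ennreal (u^((K+1-n)-1) * exp(-((l * sqrt t)/sqrt t)*u - (l * sqrt t) * sqrt t/u)) * indicator {0<..} u \<partial>lborel)"
      using n st t by (simp add: mult.assoc)
    also have "\<dots> = ennreal (2 * sqrt t^(K+1-n) * bessel_K (real (K+1-n)) (2*(l * sqrt t)))"
      using n t l by (intro bessel_nn) auto
    finally show "(\<integral>\<^sup>+u. ennreal (u^(K-n) * exp(-l*u - l*t/u)) * indicator {0<..} u \<partial>lborel) = ennreal (2 * sqrt t^(K+1-n) * bessel_K (real (K+1-n)) (2*(l * sqrt t)))" .
  qed
  also have "\<dots> = ennreal (\<Sum>n\<le>K. 2 * (l * sqrt t)^(K+1+n) * bessel_K (real (K+1-n)) (2*(l * sqrt t)) / (fact K * fact n))"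
  proof -
    have "(\<Sum>n\<le>K. ennreal (c n) * ennreal (2 * sqrt t^(K+1-n) * bessel_K (real (K+1-n)) (2*(l * sqrt t))))
      = (\<Sum>n\<le>K. ennreal (2 * (l * sqrt t)^(K+1+n) * bessel_K (real (K+1-n)) (2*(l * sqrt t)) / (fact K * fact n)))"
    proof (intro sum.cong refl)
      fix n assume n: "n \<in> {..K}"
      have "c n * (2 * sqrt t^(K+1-n) * bessel_K (real (K+1-n)) (2*(l * sqrt t)))
         = 2 * (l^(K+1)*(l*t)^n * sqrt t^(K+1-n)) * bessel_K (real (K+1-n)) (2*(l * sqrt t)) / (fact K * fact n)"
        by (simp add: c_def)
      also have "\<dots> = 2 * (l * sqrt t)^(K+1+n) * bessel_K (real (K+1-n)) (2*(l * sqrt t)) / (fact K * fact n)"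
        using n t by (subst pow_alg) auto
      finally have e: "c n * (2 * sqrt t^(K+1-n) * bessel_K (real (K+1-n)) (2*(l * sqrt t)))
         = 2 * (l * sqrt t)^(K+1+n) * bessel_K (real (K+1-n)) (2*(l * sqrt t)) / (fact K * fact n)" .
      have "c n \<ge> 0" using l t by (simp add: c_def)
      then have "ennreal (c n) * ennreal (2 * sqrt t^(K+1-n) * bessel_K (real (K+1-n)) (2*(l * sqrt t)))
        = ennreal (c n * (2 * sqrt t^(K+1-n) * bessel_K (real (K+1-n)) (2*(l * sqrt t))))"
        by (rule ennreal_mult'[symmetric])
      then show "ennreal (c n) * ennreal (2 * sqrt t^(K+1-n) * bessel_K (real (K+1-n)) (2*(l * sqrt t)))
        = ennreal (2 * (l * sqrt t)^(K+1+n) * bessel_K (real (K+1-n)) (2*(l * sqrt t)) / (fact K * fact n))"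
        unfolding e .
    qed
    also have "\<dots> = ennreal (\<Sum>n\<le>K. 2 * (l * sqrt t)^(K+1+n) * bessel_K (real (K+1-n)) (2*(l * sqrt t)) / (fact K * fact n))"
      using l t by (intro sum_ennreal) (auto intro!: divide_nonneg_pos mult_nonneg_nonneg bessel_K_nonneg)
    finally show ?thesis .
  qed
  finally show ?thesis .
qed

theorem mainTheorem1:
  fixes M :: "'a measure" and N :: nat and \<Omega> \<gamma>bar \<tau> R :: real
    and h g :: "nat \<Rightarrow> 'a \<Rightarrow> complex"
  assumes "prob_space M"
    and "N \<ge> 1" and "\<Omega> > 0" and "\<gamma>bar > 0" and "0 < \<tau>" and "\<tau> < 1" and "R > 0"
    and "prob_space.indep_vars M (\<lambda>_. borel)
           (\<lambda>i. case i of Inl k \<Rightarrow> h k | Inr k \<Rightarrow> g k) ({..<N} <+> {..<N})"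
    and "\<forall>k<N. distributed M lborel (h k) (cscg_density \<Omega>)"
    and "\<forall>k<N. distributed M lborel (g k) (cscg_density \<Omega>)"
  defines "\<gamma>A \<equiv> (\<lambda>\<omega>. \<tau> / (1 - \<tau>) * \<gamma>bar * (\<Sum>k<N. (cmod (h k \<omega>))\<^sup>2) * (\<Sum>k<N. (cmod (g k \<omega>))\<^sup>2))"
    and "x \<equiv> sqrt ((1 - \<tau>) * (2 powr R - 1) / (\<tau> * \<gamma>bar * \<Omega>\<^sup>2))"
  shows "let \<gamma>0 = 2 powr R - 1;
             Pout = measure M {\<omega> \<in> space M. log 2 (1 + \<gamma>A \<omega>) < R};
             S = (\<Sum>p = 0..N - 1. x ^ (N + p) * bessel_K (real (N - p)) (2 * x) / fact p)
         in Pout = measure M {\<omega> \<in> space M. \<gamma>A \<omega> < \<gamma>0}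
          \<and> Pout = 1 - 2 / fact (N - 1) * S
          \<and> (1 - Pout) * R * (1 - \<tau>) = 2 * R * (1 - \<tau>) / fact (N - 1) * S"
proof -
  interpret P: prob_space M by fact
  note N = assms(2) and Om = assms(3) and gb = assms(4) and tau0 = assms(5) and tau1 = assms(6) and R = assms(7)
  define F where "F = (\<lambda>i. case i of Inl k \<Rightarrow> h k | Inr k \<Rightarrow> g k)"
  define I where "I = ({..<N} <+> {..<N})"
  define l where "l = 1 / \<Omega>"
  have l: "l > 0" using Om by (simp add: l_def)
  have indF: "P.indep_vars (\<lambda>_. borel) F I" using assms(8) by (simp add: F_def I_def)
  have Fm[measurable]: "F i \<in> borel_measurable M" if "i \<in> I" for i
    using indF that unfolding P.indep_vars_def by auto
  have Fd: "distributed M lborel (F i) (cscg_density \<Omega>)" if "i \<in> I" for i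
    using that assms(9,10) by (auto simp: F_def I_def)
  have sq_ind: "P.indep_vars (\<lambda>_. borel) (\<lambda>i \<omega>. (cmod (F i \<omega>))^2) I"
    by (rule P.indep_vars_compose2[OF indF]) measurable
  define X where "X = (\<lambda>\<omega>. \<Sum>k<N. (cmod (h k \<omega>))\<^sup>2)"
  define Y where "Y = (\<lambda>\<omega>. \<Sum>k<N. (cmod (g k \<omega>))\<^sup>2)"
  have sum_dist: "distributed M lborel (\<lambda>\<omega>. \<Sum>i\<in>J. (cmod (F i \<omega>))^2) (erlang_density (N - 1) l)"
    if J: "J = Inl ` {..<N} \<or> J = Inr ` {..<N}" for J
  proof -
    have JI: "J \<subseteq> I" using J by (auto simp: I_def)
    have cJ: "card J = N" using J by (auto simp: card_image)
    have "distributed M lborel (\<lambda>\<omega>. \<Sum>i\<in>J. (cmod (F i \<omega>))^2) (erlang_density (card J - 1) l)"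
    proof (rule P.exponential_distributed_sum)
      show "finite J" using J by auto
      show "J \<noteq> {}" using J N by (auto simp: lessThan_empty_iff)
      show "0 < l" by fact
      show "distributed M lborel (\<lambda>\<omega>. (cmod (F i \<omega>))^2) (exponential_density l)" if "i \<in> J" for i
        unfolding l_def using cscg_sq_exponential[OF assms(1) Om Fd] that JI by auto
      show "P.indep_vars (\<lambda>i. borel) (\<lambda>i \<omega>. (cmod (F i \<omega>))^2) J"
        by (rule P.indep_vars_subset[OF sq_ind JI])
    qed
    then show ?thesis using cJ by simp
  qed
  have Xd: "distributed M lborel X (erlang_density (N - 1) l)"
  proof -
    have "(\<lambda>\<omega>. \<Sum>i\<in>Inl ` {..<N}. (cmod (F i \<omega>))^2) = X"
      by (simp add: X_def F_def sum.reindex fun_eq_iff)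
    then show ?thesis using sum_dist[of "Inl ` {..<N}"] by simp
  qed
  have Yd: "distributed M lborel Y (erlang_density (N - 1) l)"
  proof -
    have "(\<lambda>\<omega>. \<Sum>i\<in>Inr ` {..<N}. (cmod (F i \<omega>))^2) = Y"
      by (simp add: Y_def F_def sum.reindex fun_eq_iff)
    then show ?thesis using sum_dist[of "Inr ` {..<N}"] by simp
  qed
  have indXY: "P.indep_var borel X borel Y"
  proof -
    define Kb where "Kb = (\<lambda>b::bool. if b then Inl ` {..<N} else Inr ` {..<N})"
    have r: "P.indep_vars (\<lambda>j. PiM (Kb j) (\<lambda>_. borel)) (\<lambda>j \<omega>. restrict (\<lambda>i. F i \<omega>) (Kb j)) UNIV"
      by (rule P.indep_vars_restrict[OF indF]) (auto simp: Kb_def I_def disjoint_family_on_def)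
    define Yc where "Yc = (\<lambda>(j::bool) (\<phi>::nat + nat \<Rightarrow> complex). \<Sum>i\<in>Kb j. (cmod (\<phi> i))^2)"
    have c: "P.indep_vars (\<lambda>_. borel) (\<lambda>j \<omega>. Yc j (restrict (\<lambda>i. F i \<omega>) (Kb j))) UNIV"
    proof (rule P.indep_vars_compose2[OF r])
      fix j :: bool
      show "Yc j \<in> borel_measurable (PiM (Kb j) (\<lambda>_. borel))"
        unfolding Yc_def
        by (intro borel_measurable_sum borel_measurable_power borel_measurable_norm measurable_component_singleton) simp_all
    qed
    have e: "(\<lambda>j \<omega>. Yc j (restrict (\<lambda>i. F i \<omega>) (Kb j))) = case_bool X Y"
      by (auto simp: fun_eq_iff Yc_def Kb_def X_def Y_def F_def sum.reindex split: bool.split)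
    have cb: "(\<lambda>i::bool. case i of True \<Rightarrow> (borel::real measure) | False \<Rightarrow> borel) = (\<lambda>_. borel)"
      by (simp add: fun_eq_iff split: bool.split)
    show ?thesis using c unfolding P.indep_var_def e cb .
  qed
  note gA = assms(11) and xdef = assms(12)
  define c0 where "c0 = \<tau> / (1 - \<tau>) * \<gamma>bar"
  define \<gamma>0 where "\<gamma>0 = 2 powr R - 1"
  define t where "t = \<gamma>0 / c0"
  have c0: "c0 > 0" using tau0 tau1 gb by (simp add: c0_def)
  have g0: "\<gamma>0 > 0" using R by (simp add: \<gamma>0_def)
  have t: "t > 0" using c0 g0 by (simp add: t_def)
  have gAe: "\<gamma>A \<omega> = c0 * (X \<omega> * Y \<omega>)" for \<omega>
    by (simp add: gA c0_def X_def Y_def mult_ac)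
  have XYnn: "X \<omega> * Y \<omega> \<ge> 0" for \<omega>
    by (simp add: X_def Y_def sum_nonneg)
  have Xm[measurable]: "X \<in> borel_measurable M" using distributed_measurable[OF Xd] by simp
  have Ym[measurable]: "Y \<in> borel_measurable M" using distributed_measurable[OF Yd] by simp
  have set1: "{\<omega> \<in> space M. log 2 (1 + \<gamma>A \<omega>) < R} = {\<omega> \<in> space M. \<gamma>A \<omega> < \<gamma>0}"
  proof -
    have "log 2 (1 + \<gamma>A \<omega>) < R \<longleftrightarrow> \<gamma>A \<omega> < \<gamma>0" for \<omega>
    proof -
      have "1 + \<gamma>A \<omega> > 0" using gAe[of \<omega>] c0 XYnn[of \<omega>] by (simp add: add_pos_nonneg)
      then show ?thesis unfolding \<gamma>0_def by (subst log_less_iff) auto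
    qed
    then show ?thesis by auto
  qed
  have set2: "{\<omega> \<in> space M. \<gamma>A \<omega> < \<gamma>0} = space M - {\<omega>\<in>space M. t \<le> X \<omega> * Y \<omega>}"
  proof -
    have "\<gamma>A \<omega> < \<gamma>0 \<longleftrightarrow> \<not> t \<le> X \<omega> * Y \<omega>" for \<omega>
      using c0 by (simp add: gAe t_def not_le pos_less_divide_eq mult.commute)
    then show ?thesis by auto
  qed
  define T where "T = (\<Sum>n\<le>N-1. 2 * (l * sqrt t)^(N-1+1+n) * bessel_K (real (N-1+1-n)) (2*(l * sqrt t)) / (fact (N-1) * fact n))"
  have T0: "T \<ge> 0" unfolding T_def using l t
    by (intro sum_nonneg) (auto intro!: divide_nonneg_pos mult_nonneg_nonneg bessel_K_nonneg)
  have "emeasure M {\<omega>\<in>space M. t \<le> X \<omega> * Y \<omega>} = ennreal T"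
    unfolding T_def by (rule P.erlang_product_tail[OF l t Xd Yd indXY])
  then have mT: "measure M {\<omega>\<in>space M. t \<le> X \<omega> * Y \<omega>} = T"
    using T0 by (simp add: P.emeasure_eq_measure)
  have xe: "x = l * sqrt t"
  proof -
    have "(1 - \<tau>) * (2 powr R - 1) / (\<tau> * \<gamma>bar * \<Omega>\<^sup>2) = t / \<Omega>^2"
      using tau0 tau1 gb Om by (simp add: t_def c0_def \<gamma>0_def field_simps)
    then show ?thesis using Om by (simp add: xdef l_def real_sqrt_divide)
  qed
  have TS: "T = 2 / fact (N - 1) * (\<Sum>p = 0..N - 1. x ^ (N + p) * bessel_K (real (N - p)) (2 * x) / fact p)"
  proof -
    have NN: "N - 1 + 1 = N" using N by simp
    show ?thesis unfolding T_def NN xe[symmetric] atLeast0AtMost sum_distrib_left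
      by (intro sum.cong refl) (simp add: field_simps)
  qed
  have Pout: "measure M {\<omega> \<in> space M. \<gamma>A \<omega> < \<gamma>0} = 1 - T"
    unfolding set2 by (subst P.prob_compl) (auto simp: mT)
  show ?thesis
    unfolding Let_def \<gamma>0_def[symmetric] set1 Pout TS[symmetric]
    by (simp add: TS algebra_simps)
qed

end
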